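(* Let $r>0$ and $k\ge1$ be an integer. Let $\mathcal N=(G,\beta,r)$ be a multi-path network of length $k$ with nodes $v_0,\dots,v_k$, where every arc joins two consecutive nodes, and for $i=1,\dots,k$ let $A_i$ be the set of arcs joining $v_{i-1}$ and $v_i$. Let $s=v_0$, $t=v_k$, and let $(\pi,f)$ be a potential-based $(s,t)$-flow of value $d>0$ in $\mathcal N$. If $\pi\in[0,\bar\pi]^V$ for some $\bar\pi>0$, then $$\frac{1}{k\sqrt[r]{k}}\sum_{i=1}^k\sum_{a\in A_i}\mu_a\geq\frac{d}{\sqrt[r]{\bar\pi}},$$ where $\mu_a=\beta_a^{-1/r}$.
   Context: A potential-based flow network $\mathcal N=(G,\beta,r)$ consists of a weakly connected directed multigraph $G=(V,A)$ without loops, resistances $\beta\in\mathbb{R}^A_{>0}$ and a degree $r>0$; the conductance of arc $a$ is $\mu_a=\beta_a^{-1/r}$. A potential-based $(s,t)$-flow of value $d$ is a pair $(\pi,f)\in\mathbb{R}^V\times\mathbb{R}^A$ with $\pi_u-\pi_v=\beta_a\,\mathrm{sign}(f_a)|f_a|^r$ for every arc $a=(u,v)$ and $\sum_{a\in\delta^+(v)}f_a-\sum_{a\in\delta^-(v)}f_a=b_v$ for all $v\in V$, where $b=d(\chi_s-\chi_t)$, $\chi_v$ the unit vector of $v$, and $\delta^+(v)$, $\delta^-(v)$ are the arcs leaving, resp. entering, $v$. *)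

theory Defs
  imports Complex_Main
begin

text \<open>A directed multigraph on vertex set V, with arc set A (abstract arc type 'a),
  tail/head maps tail, head.  Nodes of a multi-path network of length k are v_i = i, i = 0..k.\<close>

definition joins :: "('a \<Rightarrow> nat) \<Rightarrow> ('a \<Rightarrow> nat) \<Rightarrow> 'a \<Rightarrow> nat \<Rightarrow> nat \<Rightarrow> bool" where
  "joins tail head a u v \<longleftrightarrow> (tail a = u \<and> head a = v) \<or> (tail a = v \<and> head a = u)"

text \<open>Multi-path network of length k: vertices 0..k, finitely many arcs, every arc joins
  two consecutive nodes (in either direction); weak connectivity means every pair of
  consecutive nodes is joined by at least one arc.\<close>
definition multi_path_network :: "nat \<Rightarrow> 'a set \<Rightarrow> ('a \<Rightarrow> nat) \<Rightarrow> ('a \<Rightarrow> nat) \<Rightarrow> bool" where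
  "multi_path_network k A tail head \<longleftrightarrow>
     k \<ge> 1 \<and> finite A \<and>
     (\<forall>a\<in>A. \<exists>i\<in>{1..k}. joins tail head a (i - 1) i) \<and>
     (\<forall>i\<in>{1..k}. \<exists>a\<in>A. joins tail head a (i - 1) i)"

definition arcs_between :: "'a set \<Rightarrow> ('a \<Rightarrow> nat) \<Rightarrow> ('a \<Rightarrow> nat) \<Rightarrow> nat \<Rightarrow> 'a set" where
  "arcs_between A tail head i = {a\<in>A. joins tail head a (i - 1) i}"

definition conductance :: "('a \<Rightarrow> real) \<Rightarrow> real \<Rightarrow> 'a \<Rightarrow> real" where
  "conductance \<beta> r a = \<beta> a powr (- 1 / r)"

definition potential_flow ::
  "'v set \<Rightarrow> 'a set \<Rightarrow> ('a \<Rightarrow> 'v) \<Rightarrow> ('a \<Rightarrow> 'v) \<Rightarrow> ('a \<Rightarrow> real) \<Rightarrow> real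
   \<Rightarrow> 'v \<Rightarrow> 'v \<Rightarrow> real \<Rightarrow> ('v \<Rightarrow> real) \<Rightarrow> ('a \<Rightarrow> real) \<Rightarrow> bool" where
  "potential_flow V A tail head \<beta> r s t d \<pi> f \<longleftrightarrow>
     (\<forall>a\<in>A. \<pi> (tail a) - \<pi> (head a) = \<beta> a * sgn (f a) * \<bar>f a\<bar> powr r) \<and>
     (\<forall>v\<in>V. (\<Sum>a\<in>{a\<in>A. tail a = v}. f a) - (\<Sum>a\<in>{a\<in>A. head a = v}. f a)
              = d * ((if v = s then 1 else 0) - (if v = t then 1 else 0)))"

end

theory Submission
  imports Defs "HOL-Analysis.Analysis"
begin

lemma conv_neg_powr: assumes "p > 0" shows "convex_on {0<..} (\<lambda>x::real. x powr (-p))"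
proof (rule f''_ge0_imp_convex[where f' = "\<lambda>x. -p * x powr (-p-1)" and f'' = "\<lambda>x. -p * ((-p-1) * x powr (-p-1-1))"])
  show "convex {0::real<..}" by (rule convex_real_interval)
  fix x :: real assume x: "x \<in> {0<..}"
  show "DERIV (\<lambda>x. x powr (-p)) x :> -p * x powr (-p-1)"
    using x has_real_derivative_powr[of x "-p"] by auto
  show "DERIV (\<lambda>x. -p * x powr (-p-1)) x :> -p * ((-p-1) * x powr (-p-1-1))"
    using x by (intro DERIV_cmult has_real_derivative_powr) auto
  have e: "-p * ((-p-1) * x powr (-p-1-1)) = p * (p + 1) * x powr (-p-1-1)" by algebra
  have "x powr (-p-1-1) > 0" using x by simp
  then show "0 \<le> -p * ((-p-1) * x powr (-p-1-1))" unfolding e using assms by simp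
qed

lemma key_ineq:
  fixes D :: "nat \<Rightarrow> real"
  assumes p: "p > 0" and k: "k \<ge> 1" and pos: "\<forall>i\<in>{1..k}. D i > 0"
    and sumle: "(\<Sum>i=1..k. D i) \<le> P"
  shows "(\<Sum>i=1..k. D i powr (-p)) \<ge> real k powr (1+p) * P powr (-p)"
proof -
  have kpos: "real k > 0" using k by simp
  have "(\<Sum>i\<in>{1..k}. (1 / real k) *\<^sub>R D i) powr (-p) \<le> (\<Sum>i\<in>{1..k}. (1 / real k) * D i powr (-p))"
    by (rule convex_on_sum[OF _ _ conv_neg_powr[OF p]]) (use k pos in auto)
  hence J: "((\<Sum>i=1..k. D i) / real k) powr (-p) \<le> (\<Sum>i=1..k. D i powr (-p)) / real k"
    by (simp add: sum_distrib_left sum_divide_distrib)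
  have Spos: "(\<Sum>i=1..k. D i) > 0" using k pos by (intro sum_pos) auto
  have "(P / real k) powr (-p) \<le> ((\<Sum>i=1..k. D i) / real k) powr (-p)"
    using Spos sumle kpos p by (intro powr_mono2') (auto simp: divide_right_mono)
  also note J
  finally have "real k * (P / real k) powr (-p) \<le> (\<Sum>i=1..k. D i powr (-p))"
    using kpos by (simp add: field_simps)
  moreover have "real k * (P / real k) powr (-p) = real k powr (1+p) * P powr (-p)"
    using kpos Spos sumle by (simp add: powr_divide powr_minus powr_add field_simps)
  ultimately show ?thesis by simp
qed

lemma tele: "(\<Sum>i=1..k. (\<pi> (i-1) - \<pi> i)::real) = \<pi> 0 - \<pi> (k::nat)"
  by (induction k) auto

theorem theorem2:
  fixes k :: nat and A :: "'a set" and tail head :: "'a \<Rightarrow> nat"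
    and \<beta> :: "'a \<Rightarrow> real" and r d \<pi>bar :: real
    and \<pi> :: "nat \<Rightarrow> real" and f :: "'a \<Rightarrow> real"
  assumes "r > 0"
    and "multi_path_network k A tail head"
    and "\<forall>a\<in>A. \<beta> a > 0"
    and "potential_flow {0..k} A tail head \<beta> r 0 k d \<pi> f"
    and "d > 0"
    and "\<pi>bar > 0"
    and "\<forall>v\<in>{0..k}. 0 \<le> \<pi> v \<and> \<pi> v \<le> \<pi>bar"
  shows "1 / (real k * real k powr (1 / r))
           * (\<Sum>i=1..k. \<Sum>a\<in>arcs_between A tail head i. conductance \<beta> r a)
         \<ge> d / \<pi>bar powr (1 / r)"
proof -
  note r = assms(1) and bpos = assms(3) and dpos = assms(5) and pb = assms(6) and pib = assms(7)
  have k1: "k \<ge> 1" and fin: "finite A"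
    and arcs: "\<forall>a\<in>A. \<exists>i\<in>{1..k}. joins tail head a (i - 1) i"
    using assms(2) unfolding multi_path_network_def by auto
  have pot: "\<forall>a\<in>A. \<pi> (tail a) - \<pi> (head a) = \<beta> a * sgn (f a) * \<bar>f a\<bar> powr r"
    and cons: "\<forall>v\<in>{0..k}. (\<Sum>a\<in>{a\<in>A. tail a = v}. f a) - (\<Sum>a\<in>{a\<in>A. head a = v}. f a)
              = d * ((if v = 0 then 1 else 0) - (if v = k then 1 else 0))"
    using assms(4) unfolding potential_flow_def by auto
  define Ai where "Ai i = arcs_between A tail head i" for i
  define g where "g i a = (if tail a = i - 1 then f a else - f a)" for i a
  define D where "D i = \<pi> (i - 1) - \<pi> i" for i
  have AiA: "Ai i \<subseteq> A" for i unfolding Ai_def arcs_between_def by auto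
  have cut: "(\<Sum>a\<in>Ai i. g i a) = d" if i: "i \<in> {1..k}" for i
  proof -
    let ?I = "{i..k}"
    have tl: "(\<Sum>a\<in>{a\<in>A. tail a = v}. f a) = (\<Sum>a\<in>A. if tail a = v then f a else 0)" for v
      using fin by (simp add: sum.inter_filter)
    have hd: "(\<Sum>a\<in>{a\<in>A. head a = v}. f a) = (\<Sum>a\<in>A. if head a = v then f a else 0)" for v
      using fin by (simp add: sum.inter_filter)
    have "(\<Sum>v\<in>?I. (\<Sum>a\<in>{a\<in>A. tail a = v}. f a) - (\<Sum>a\<in>{a\<in>A. head a = v}. f a))
        = (\<Sum>v\<in>?I. \<Sum>a\<in>A. (if tail a = v then f a else 0) - (if head a = v then f a else 0))"
      by (simp add: tl hd sum_subtractf)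
    also have "\<dots> = (\<Sum>a\<in>A. \<Sum>v\<in>?I. (if tail a = v then f a else 0) - (if head a = v then f a else 0))"
      by (rule sum.swap)
    also have "\<dots> = (\<Sum>a\<in>A. (if tail a \<in> ?I then f a else 0) - (if head a \<in> ?I then f a else 0))"
      by (intro sum.cong refl) (simp add: sum_subtractf)
    also have "\<dots> = (\<Sum>a\<in>A. if a \<in> Ai i then - g i a else 0)"
    proof (intro sum.cong refl)
      fix a assume a: "a \<in> A"
      then obtain j where j: "j \<in> {1..k}" "joins tail head a (j - 1) j" using arcs by blast
      have jo: "tail a = j - 1 \<and> head a = j \<or> tail a = j \<and> head a = j - 1"
        using j(2) unfolding joins_def by blast
      show "(if tail a \<in> ?I then f a else 0) - (if head a \<in> ?I then f a else 0) = (if a \<in> Ai i then - g i a else 0)"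
      proof (cases "j = i")
        case True
        have aAi: "a \<in> Ai i" using j True a unfolding Ai_def arcs_between_def by simp
        have lt: "i - 1 < i" "i \<le> k" "i - 1 \<noteq> i" "\<not> i \<le> i - 1" "i - 1 \<le> k" using i by auto
        from jo True consider "tail a = i - 1" "head a = i" | "tail a = i" "head a = i - 1" by blast
        then show ?thesis
        proof cases
          case 1 then show ?thesis using aAi lt by (simp add: g_def)
        next
          case 2 then show ?thesis using aAi lt by (simp add: g_def)
        qed
      next
        case False
        have "\<not> joins tail head a (i - 1) i"
        proof
          assume "joins tail head a (i - 1) i"
          hence "max (tail a) (head a) = i" using i unfolding joins_def by auto
          moreover have "max (tail a) (head a) = j" using jo j(1) by auto
          ultimately show False using False by simp
        qed
        then have "a \<notin> Ai i" unfolding Ai_def arcs_between_def by auto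
        moreover have "(tail a \<in> ?I) = (head a \<in> ?I)"
        proof (cases "j < i")
          case True
          hence "tail a < i" "head a < i" using jo by auto
          thus ?thesis by simp
        next
          case F: False
          hence "j > i" using False by simp
          hence "tail a \<ge> i" "head a \<ge> i" "tail a \<le> k" "head a \<le> k" using jo j(1) by auto
          thus ?thesis by simp
        qed
        ultimately show ?thesis by simp
      qed
    qed
    also have "\<dots> = (\<Sum>a\<in>A \<inter> Ai i. - g i a)"
      using fin by (simp add: sum.inter_restrict)
    also have "\<dots> = - (\<Sum>a\<in>Ai i. g i a)"
      using AiA[of i] by (simp add: Int_absorb1 sum_negf)
    finally have L: "(\<Sum>v\<in>?I. (\<Sum>a\<in>{a\<in>A. tail a = v}. f a) - (\<Sum>a\<in>{a\<in>A. head a = v}. f a))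
        = - (\<Sum>a\<in>Ai i. g i a)" .
    have "(\<Sum>v\<in>?I. (\<Sum>a\<in>{a\<in>A. tail a = v}. f a) - (\<Sum>a\<in>{a\<in>A. head a = v}. f a))
        = (\<Sum>v\<in>?I. if v = k then - d else 0)"
      using cons i by (intro sum.cong refl) auto
    also have "\<dots> = - d" using i by simp
    finally show ?thesis using L by simp
  qed
  have rel: "D i = \<beta> a * sgn (g i a) * \<bar>g i a\<bar> powr r" if i: "i \<in> {1..k}" and a: "a \<in> Ai i" for i a
  proof -
    have aA: "a \<in> A" and jn: "joins tail head a (i - 1) i" using a unfolding Ai_def arcs_between_def by auto
    have p: "\<pi> (tail a) - \<pi> (head a) = \<beta> a * sgn (f a) * \<bar>f a\<bar> powr r" using pot aA by blast
    from jn consider "tail a = i - 1" "head a = i" | "tail a = i" "head a = i - 1" unfolding joins_def by blast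
    then show ?thesis
    proof cases
      case 1 then show ?thesis using p unfolding D_def g_def by simp
    next
      case 2
      have "tail a \<noteq> i - 1" using 2 i by auto
      then show ?thesis using p 2 unfolding D_def g_def by (simp add: sgn_minus)
    qed
  qed
  have Dpos: "D i > 0" if i: "i \<in> {1..k}" for i
  proof (rule ccontr)
    assume "\<not> D i > 0"
    hence "\<forall>a\<in>Ai i. g i a \<le> 0"
    proof (intro ballI)
      fix a assume a: "a \<in> Ai i" "\<not> D i > 0"
      show "g i a \<le> 0"
      proof (rule ccontr)
        assume "\<not> g i a \<le> 0"
        hence "g i a > 0" by simp
        moreover have "\<beta> a > 0" using bpos AiA a by blast
        ultimately have "\<beta> a * sgn (g i a) * \<bar>g i a\<bar> powr r > 0" by simp
        thus False using rel[OF i a(1)] a(2) by simp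
      qed
    qed
    hence "(\<Sum>a\<in>Ai i. g i a) \<le> 0" by (intro sum_nonpos) auto
    thus False using cut[OF i] dpos by simp
  qed
  have condv: "conductance \<beta> r a = 1 / \<beta> a powr (1 / r)" for a
  proof -
    have "- 1 / r = - (1 / r)" by simp
    thus ?thesis unfolding conductance_def by (simp add: powr_minus_divide)
  qed
  have gval: "g i a = D i powr (1 / r) * conductance \<beta> r a" if i: "i \<in> {1..k}" and a: "a \<in> Ai i" for i a
  proof -
    have b: "\<beta> a > 0" using bpos AiA a by blast
    have R: "D i = \<beta> a * sgn (g i a) * \<bar>g i a\<bar> powr r" by (rule rel[OF i a])
    have gp: "g i a > 0"
    proof (rule ccontr)
      assume "\<not> g i a > 0"
      hence "sgn (g i a) \<le> 0" by (simp add: sgn_if)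
      hence "\<beta> a * sgn (g i a) * \<bar>g i a\<bar> powr r \<le> 0"
        using b by (simp add: mult_nonneg_nonpos mult_nonpos_nonneg)
      thus False using R Dpos[OF i] by simp
    qed
    hence "g i a powr r = D i / \<beta> a" using R b by (simp add: field_simps)
    hence "g i a = (D i / \<beta> a) powr (1 / r)"
    proof -
      have "g i a = (g i a powr r) powr (1 / r)" using gp r by (simp add: powr_powr)
      thus ?thesis using \<open>g i a powr r = D i / \<beta> a\<close> by simp
    qed
    also have "\<dots> = D i powr (1 / r) / \<beta> a powr (1 / r)"
      using b Dpos[OF i] by (simp add: powr_divide)
    finally show ?thesis by (simp add: condv)
  qed
  have Mval: "(\<Sum>a\<in>Ai i. conductance \<beta> r a) = d * D i powr (- (1 / r))" if i: "i \<in> {1..k}" for i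
  proof -
    have "d = (\<Sum>a\<in>Ai i. D i powr (1 / r) * conductance \<beta> r a)"
      using cut[OF i] gval[OF i] by (metis (no_types, lifting) sum.cong)
    also have "\<dots> = D i powr (1 / r) * (\<Sum>a\<in>Ai i. conductance \<beta> r a)"
      by (simp add: sum_distrib_left)
    finally have "d = D i powr (1 / r) * (\<Sum>a\<in>Ai i. conductance \<beta> r a)" .
    moreover have "D i powr (1 / r) > 0" using Dpos[OF i] by simp
    ultimately show ?thesis by (simp add: powr_minus_divide field_simps)
  qed
  define p where "p = 1 / r"
  have p0: "p > 0" using r unfolding p_def by simp
  have sumD: "(\<Sum>i=1..k. D i) \<le> \<pi>bar"
  proof -
    have "(\<Sum>i=1..k. D i) = \<pi> 0 - \<pi> k" unfolding D_def by (rule tele)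
    moreover have "\<pi> 0 \<le> \<pi>bar" "0 \<le> \<pi> k" using pib by auto
    ultimately show ?thesis by simp
  qed
  have S: "(\<Sum>i=1..k. \<Sum>a\<in>arcs_between A tail head i. conductance \<beta> r a) = d * (\<Sum>i=1..k. D i powr (- p))"
    using Mval unfolding Ai_def p_def by (simp add: sum_distrib_left)
  have K: "(\<Sum>i=1..k. D i powr (- p)) \<ge> real k powr (1 + p) * \<pi>bar powr (- p)"
    by (rule key_ineq[OF p0 k1]) (use Dpos sumD in auto)
  have kpos: "real k > 0" using k1 by simp
  have kk: "real k powr (1 + p) = real k * real k powr p" using kpos by (simp add: powr_add)
  have pos2: "real k * real k powr p > 0" using kpos by simp
  have "d / \<pi>bar powr p = (d * (real k powr (1 + p) * \<pi>bar powr (- p))) / (real k * real k powr p)"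
    using kk pos2 pb kpos by (simp add: powr_minus_divide field_simps)
  also have "\<dots> \<le> (d * (\<Sum>i=1..k. D i powr (- p))) / (real k * real k powr p)"
    using K dpos pos2 by (intro divide_right_mono mult_left_mono) auto
  finally show ?thesis unfolding S p_def by simp
qed

end
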